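(* For a restless bandit and a family $\mathcal F\subseteq2^{N^{\{0,1\}}}$ as in the context, suppose $w^S_j>0$ for all $S\in\mathcal F$ and $j\in N^{\{0,1\}}$. Then for every $S\in\mathcal F$ and $j\in S$, with vectors indexed by $N$: (a) $\mathbf v^{S\setminus\{j\}}-\mathbf v^S=\dfrac{c^S_j}{w^S_j}\,(\mathbf b^S-\mathbf b^{S\setminus\{j\}})=\dfrac{c^{S\setminus\{j\}}_j}{w^{S\setminus\{j\}}_j}\,(\mathbf b^S-\mathbf b^{S\setminus\{j\}})$; (b) $\dfrac{c^S_j}{w^S_j}=\dfrac{c^{S\setminus\{j\}}_j}{w^{S\setminus\{j\}}_j}$; (c) $\mathbf c^S-\mathbf c^{S\setminus\{j\}}=\dfrac{c^S_j}{w^S_j}\,(\mathbf w^S-\mathbf w^{S\setminus\{j\}})$.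
   Context: Restless bandit: finite state space $N=N^{\{0,1\}}\cup N^{\{1\}}$ (disjoint); actions $a\in\{0,1\}$; one-period costs $h^a_i$; transition probabilities $p^a_{ij}$, with $p^1_{ij}=p^0_{ij}$ and $h^1_i=h^0_i$ for $i\in N^{\{1\}}$; discount factor $\beta\in(0,1)$; activity weights $\theta^1_j>0$. For $S\subseteq N^{\{0,1\}}$ the $S$-active policy is active on $S\cup N^{\{1\}}$ and passive elsewhere; under it, from $X(0)=i$: $v^S_i=E_i[\sum_{t\ge0}h^{a(t)}_{X(t)}\beta^t]$, $b^S_i=E_i[\sum_{t\ge0}\theta^1_{X(t)}a(t)\beta^t]$; $\mathbf v^S=(v^S_i)_{i\in N}$, $\mathbf b^S=(b^S_i)_{i\in N}$. Marginal workloads $w^S_i=\theta^1_i1\{i\in N^{\{0,1\}}\}+\beta\sum_j(p^1_{ij}-p^0_{ij})b^S_j$, marginal costs $c^S_i=h^0_i-h^1_i+\beta\sum_j(p^0_{ij}-p^1_{ij})v^S_j$, $\mathbf w^S=(w^S_i)_{i\in N}$, $\mathbf c^S=(c^S_i)_{i\in N}$. *)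

theory Defs
  imports Complex_Main
begin

text \<open>Actions are the naturals 0 (passive)
  and 1 (active). p a i j: transition probabilities, h a i: one-period costs,
  th i: activity weight theta^1_i, beta: discount factor.\<close>

definition restless_bandit ::
  "'a set \<Rightarrow> 'a set \<Rightarrow> (nat \<Rightarrow> 'a \<Rightarrow> 'a \<Rightarrow> real) \<Rightarrow> (nat \<Rightarrow> 'a \<Rightarrow> real)
   \<Rightarrow> ('a \<Rightarrow> real) \<Rightarrow> real \<Rightarrow> bool" where
  "restless_bandit N01 N1 p h th beta \<longleftrightarrow>
     finite (N01 \<union> N1) \<and> N01 \<inter> N1 = {} \<and>
     (\<forall>a\<in>{0,1}. \<forall>i\<in>N01 \<union> N1. \<forall>j\<in>N01 \<union> N1. 0 \<le> p a i j) \<and>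
     (\<forall>a\<in>{0,1}. \<forall>i\<in>N01 \<union> N1. (\<Sum>j\<in>N01 \<union> N1. p a i j) = 1) \<and>
     (\<forall>i\<in>N1. \<forall>j\<in>N01 \<union> N1. p 1 i j = p 0 i j) \<and>
     (\<forall>i\<in>N1. h 1 i = h 0 i) \<and>
     0 < beta \<and> beta < 1 \<and>
     (\<forall>j\<in>N01 \<union> N1. 0 < th j)"

definition act :: "'a set \<Rightarrow> 'a set \<Rightarrow> 'a \<Rightarrow> nat" where
  "act N1 S i = (if i \<in> S \<union> N1 then 1 else 0)"

fun tprob :: "'a set \<Rightarrow> 'a set \<Rightarrow> (nat \<Rightarrow> 'a \<Rightarrow> 'a \<Rightarrow> real) \<Rightarrow> 'a set
    \<Rightarrow> nat \<Rightarrow> 'a \<Rightarrow> 'a \<Rightarrow> real" where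
  "tprob N01 N1 p S 0 i k = (if i = k then 1 else 0)"
| "tprob N01 N1 p S (Suc t) i k =
     (\<Sum>m\<in>N01 \<union> N1. tprob N01 N1 p S t i m * p (act N1 S m) m k)"

text \<open>v^S_i = E_i[sum_t h^{a(t)}_{X(t)} beta^t], written as
  sum_t beta^t sum_k P(X(t)=k) h^{a(k)}_k.\<close>
definition vS where
  "vS N01 N1 p h beta S i =
     (\<Sum>t. beta ^ t * (\<Sum>k\<in>N01 \<union> N1. tprob N01 N1 p S t i k * h (act N1 S k) k))"

text \<open>b^S_i = E_i[sum_t theta^1_{X(t)} a(t) beta^t].\<close>
definition bS where
  "bS N01 N1 p th beta S i =
     (\<Sum>t. beta ^ t * (\<Sum>k\<in>N01 \<union> N1. tprob N01 N1 p S t i k * (th k * real (act N1 S k))))"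

definition wS where
  "wS N01 N1 p th beta S i =
     th i * (if i \<in> N01 then 1 else 0)
     + beta * (\<Sum>j\<in>N01 \<union> N1. (p 1 i j - p 0 i j) * bS N01 N1 p th beta S j)"

definition cS where
  "cS N01 N1 p h beta S i =
     h 0 i - h 1 i
     + beta * (\<Sum>j\<in>N01 \<union> N1. (p 0 i j - p 1 i j) * vS N01 N1 p h beta S j)"

end

theory Submission
  imports Defs
begin

lemma act01: "act N1 S i \<in> {0,1}" by (simp add: act_def)

lemma RB_facts:
  assumes "restless_bandit N01 N1 p h th beta"
  shows "finite (N01 \<union> N1)" "N01 \<inter> N1 = {}" "0 < beta" "beta < 1"
    "\<And>a i k. a \<in> {0,1} \<Longrightarrow> i \<in> N01 \<union> N1 \<Longrightarrow> k \<in> N01 \<union> N1 \<Longrightarrow> 0 \<le> p a i k"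
    "\<And>a i. a \<in> {0,1} \<Longrightarrow> i \<in> N01 \<union> N1 \<Longrightarrow> (\<Sum>k\<in>N01 \<union> N1. p a i k) = 1"
  using assms unfolding restless_bandit_def by auto

lemma tprob_nonneg:
  assumes RB: "restless_bandit N01 N1 p h th beta" and i: "i \<in> N01 \<union> N1"
  shows "k \<in> N01 \<union> N1 \<Longrightarrow> 0 \<le> tprob N01 N1 p S t i k"
proof (induction t arbitrary: k)
  case 0 then show ?case by simp
next
  case (Suc t)
  show ?case
    unfolding tprob.simps
  proof (rule sum_nonneg, rule mult_nonneg_nonneg)
    fix m assume m: "m \<in> N01 \<union> N1"
    show "0 \<le> tprob N01 N1 p S t i m" by (rule Suc.IH[OF m])
    show "0 \<le> p (act N1 S m) m k" by (rule RB_facts(5)[OF RB act01 m Suc.prems])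
  qed
qed

lemma tprob_sum:
  assumes RB: "restless_bandit N01 N1 p h th beta" and i: "i \<in> N01 \<union> N1"
  shows "(\<Sum>k\<in>N01 \<union> N1. tprob N01 N1 p S t i k) = 1"
proof (induction t)
  case 0 then show ?case using i RB_facts(1)[OF RB] by simp
next
  case (Suc t)
  have "(\<Sum>k\<in>N01 \<union> N1. tprob N01 N1 p S (Suc t) i k)
     = (\<Sum>m\<in>N01 \<union> N1. tprob N01 N1 p S t i m * (\<Sum>k\<in>N01 \<union> N1. p (act N1 S m) m k))"
    by (simp add: sum_distrib_left sum.swap[of "\<lambda>k m. tprob N01 N1 p S t i m * p (act N1 S m) m k"])
  also have "\<dots> = (\<Sum>m\<in>N01 \<union> N1. tprob N01 N1 p S t i m)"
    by (rule sum.cong, simp, simp add: RB_facts(6)[OF RB act01])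
  finally show ?case using Suc by simp
qed

lemma tprob_back:
  assumes RB: "restless_bandit N01 N1 p h th beta" and i: "i \<in> N01 \<union> N1"
  shows "k \<in> N01 \<union> N1 \<Longrightarrow> tprob N01 N1 p S (Suc t) i k
       = (\<Sum>m\<in>N01 \<union> N1. p (act N1 S i) i m * tprob N01 N1 p S t m k)"
proof (induction t arbitrary: k)
  case 0
  have "(\<Sum>m\<in>N01 \<union> N1. (if i = m then 1 else 0) * p (act N1 S m) m k)
      = (\<Sum>m\<in>N01 \<union> N1. if i = m then p (act N1 S i) i k else 0)"
    by (rule sum.cong) auto
  moreover have "(\<Sum>m\<in>N01 \<union> N1. p (act N1 S i) i m * (if m = k then 1 else 0))
      = (\<Sum>m\<in>N01 \<union> N1. if k = m then p (act N1 S i) i k else 0)"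
    by (rule sum.cong) auto
  ultimately show ?case using i 0 RB_facts(1)[OF RB] by simp
next
  case (Suc t)
  have "tprob N01 N1 p S (Suc (Suc t)) i k
     = (\<Sum>m\<in>N01 \<union> N1. (\<Sum>n\<in>N01 \<union> N1. p (act N1 S i) i n * tprob N01 N1 p S t n m) * p (act N1 S m) m k)"
    using Suc.IH by (simp del: tprob.simps(2) add: tprob.simps(2)[of _ _ _ _ "Suc t"])
  also have "\<dots> = (\<Sum>m\<in>N01 \<union> N1. \<Sum>n\<in>N01 \<union> N1. p (act N1 S i) i n * tprob N01 N1 p S t n m * p (act N1 S m) m k)"
    by (simp add: sum_distrib_right)
  also have "\<dots> = (\<Sum>n\<in>N01 \<union> N1. \<Sum>m\<in>N01 \<union> N1. p (act N1 S i) i n * tprob N01 N1 p S t n m * p (act N1 S m) m k)"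
    by (rule sum.swap)
  also have "\<dots> = (\<Sum>n\<in>N01 \<union> N1. p (act N1 S i) i n * (\<Sum>m\<in>N01 \<union> N1. tprob N01 N1 p S t n m * p (act N1 S m) m k))"
    by (simp add: sum_distrib_left mult.assoc)
  finally show ?case by simp
qed

definition val where
  "val N01 N1 p beta S r i = (\<Sum>t. beta ^ t * (\<Sum>k\<in>N01 \<union> N1. tprob N01 N1 p S t i k * r k))"

lemma val_summable:
  assumes RB: "restless_bandit N01 N1 p h th beta" and i: "i \<in> N01 \<union> N1"
  shows "summable (\<lambda>t. beta ^ t * (\<Sum>k\<in>N01 \<union> N1. tprob N01 N1 p S t i k * r k))"
proof (rule summable_comparison_test)
  let ?B = "\<Sum>k\<in>N01 \<union> N1. \<bar>r k\<bar>"
  have b0: "0 < beta" "beta < 1" using RB_facts[OF RB] by auto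
  show "summable (\<lambda>t. beta ^ t * ?B)"
    by (rule summable_mult2, rule summable_geometric) (use b0 in simp)
  show "\<exists>N. \<forall>n\<ge>N. norm (beta ^ n * (\<Sum>k\<in>N01 \<union> N1. tprob N01 N1 p S n i k * r k)) \<le> beta ^ n * ?B"
  proof (intro exI allI impI)
    fix n :: nat
    have "\<bar>\<Sum>k\<in>N01 \<union> N1. tprob N01 N1 p S n i k * r k\<bar> \<le> (\<Sum>k\<in>N01 \<union> N1. \<bar>tprob N01 N1 p S n i k * r k\<bar>)"
      by (rule sum_abs)
    also have "\<dots> \<le> (\<Sum>k\<in>N01 \<union> N1. tprob N01 N1 p S n i k * ?B)"
    proof (rule sum_mono)
      fix k assume k: "k \<in> N01 \<union> N1"
      have "\<bar>r k\<bar> \<le> ?B" by (rule member_le_sum) (use k RB_facts(1)[OF RB] in auto)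
      then show "\<bar>tprob N01 N1 p S n i k * r k\<bar> \<le> tprob N01 N1 p S n i k * ?B"
        using tprob_nonneg[OF RB i k] by (simp add: abs_mult mult_left_mono)
    qed
    also have "\<dots> = ?B" using tprob_sum[OF RB i] by (simp add: sum_distrib_right[symmetric])
    finally show "norm (beta ^ n * (\<Sum>k\<in>N01 \<union> N1. tprob N01 N1 p S n i k * r k)) \<le> beta ^ n * ?B"
      using b0 by (simp add: abs_mult mult_left_mono)
  qed
qed

lemma val_bellman:
  assumes RB: "restless_bandit N01 N1 p h th beta" and i: "i \<in> N01 \<union> N1"
  shows "val N01 N1 p beta S r i = r i + beta * (\<Sum>m\<in>N01 \<union> N1. p (act N1 S i) i m * val N01 N1 p beta S r m)"
proof -
  let ?N = "N01 \<union> N1"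
  define f where "f m t = beta ^ t * (\<Sum>k\<in>?N. tprob N01 N1 p S t m k * r k)" for m t
  have fin: "finite ?N" using RB_facts(1)[OF RB] .
  have sm: "summable (f m)" if "m \<in> ?N" for m unfolding f_def by (rule val_summable[OF RB that])
  have "f i 0 = (\<Sum>k\<in>?N. if i = k then r i else 0)"
    unfolding f_def by (simp, rule sum.cong) auto
  then have f0: "f i 0 = r i" using i fin by simp
  have fS: "f i (Suc t) = beta * (\<Sum>m\<in>?N. p (act N1 S i) i m * f m t)" for t
  proof -
    have "f i (Suc t) = beta * beta ^ t * (\<Sum>k\<in>?N. (\<Sum>m\<in>?N. p (act N1 S i) i m * tprob N01 N1 p S t m k) * r k)"
      unfolding f_def by (simp only: power_Suc, rule arg_cong[where f="\<lambda>x. _ * x"], rule sum.cong, simp,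
          simp only: tprob_back[OF RB i])
    also have "\<dots> = beta * beta ^ t * (\<Sum>k\<in>?N. \<Sum>m\<in>?N. p (act N1 S i) i m * tprob N01 N1 p S t m k * r k)"
      by (simp add: sum_distrib_right)
    also have "\<dots> = beta * beta ^ t * (\<Sum>m\<in>?N. \<Sum>k\<in>?N. p (act N1 S i) i m * tprob N01 N1 p S t m k * r k)"
      by (subst sum.swap) (rule refl)
    also have "\<dots> = beta * (\<Sum>m\<in>?N. p (act N1 S i) i m * f m t)"
      unfolding f_def by (simp add: sum_distrib_left mult_ac)
    finally show ?thesis .
  qed
  have "val N01 N1 p beta S r i = suminf (f i)" unfolding val_def f_def ..
  also have "\<dots> = f i 0 + (\<Sum>t. f i (Suc t))" using suminf_split_head[OF sm[OF i]] by simp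
  also have "(\<Sum>t. f i (Suc t)) = (\<Sum>t. beta * (\<Sum>m\<in>?N. p (act N1 S i) i m * f m t))"
    by (simp only: fS)
  also have "\<dots> = beta * (\<Sum>t. (\<Sum>m\<in>?N. p (act N1 S i) i m * f m t))"
    by (rule suminf_mult, rule summable_sum, rule summable_mult, erule sm)
  also have "(\<Sum>t. (\<Sum>m\<in>?N. p (act N1 S i) i m * f m t)) = (\<Sum>m\<in>?N. (\<Sum>t. p (act N1 S i) i m * f m t))"
    by (rule suminf_sum, rule summable_mult, erule sm)
  also have "\<dots> = (\<Sum>m\<in>?N. p (act N1 S i) i m * suminf (f m))"
    by (rule sum.cong, simp, rule suminf_mult, erule sm)
  finally show ?thesis using f0 unfolding val_def f_def by simp
qed


lemma contraction:
  assumes RB: "restless_bandit N01 N1 p h th beta"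
    and x: "\<And>i. i \<in> N01 \<union> N1 \<Longrightarrow> x i = beta * (\<Sum>m\<in>N01 \<union> N1. p (act N1 U i) i m * x m)"
    and i: "i \<in> N01 \<union> N1"
  shows "x i = 0"
proof -
  let ?N = "N01 \<union> N1"
  have fin: "finite ?N" using RB_facts(1)[OF RB] .
  define M where "M = Max ((\<lambda>k. \<bar>x k\<bar>) ` ?N)"
  have le: "\<bar>x k\<bar> \<le> M" if "k \<in> ?N" for k unfolding M_def using fin that by auto
  have b: "0 < beta" "beta < 1" using RB_facts[OF RB] by auto
  have bnd: "\<bar>x k\<bar> \<le> beta * M" if k: "k \<in> ?N" for k
  proof -
    have "\<bar>\<Sum>m\<in>?N. p (act N1 U k) k m * x m\<bar> \<le> (\<Sum>m\<in>?N. \<bar>p (act N1 U k) k m * x m\<bar>)" by (rule sum_abs)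
    also have "\<dots> \<le> (\<Sum>m\<in>?N. p (act N1 U k) k m * M)"
    proof (rule sum_mono)
      fix m assume m: "m \<in> ?N"
      show "\<bar>p (act N1 U k) k m * x m\<bar> \<le> p (act N1 U k) k m * M"
        using RB_facts(5)[OF RB act01[of N1 U k] k m] le[OF m] by (simp add: abs_mult mult_left_mono)
    qed
    also have "\<dots> = M" using RB_facts(6)[OF RB act01[of N1 U k] k] by (simp add: sum_distrib_right[symmetric])
    finally show ?thesis using x[OF k] b by (simp add: abs_mult mult_left_mono)
  qed
  have "M \<in> (\<lambda>k. \<bar>x k\<bar>) ` ?N" unfolding M_def using fin i by (intro Max_in) auto
  then obtain k where k: "k \<in> ?N" "M = \<bar>x k\<bar>" by auto
  have "M \<le> beta * M" using bnd[OF k(1)] k(2) by simp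
  then have "M \<le> 0" using b by (smt (verit) mult_le_cancel_right1)
  then show ?thesis using le[OF i] by simp
qed

lemma diff_eq:
  assumes RB: "restless_bandit N01 N1 p h th beta"
    and X: "\<forall>i\<in>N01 \<union> N1. X i = ra i + beta * (\<Sum>m\<in>N01 \<union> N1. p (aa i) i m * X m)"
    and Y: "\<forall>i\<in>N01 \<union> N1. Y i = rb i + beta * (\<Sum>m\<in>N01 \<union> N1. p (ab i) i m * Y m)"
    and same: "\<And>i. i \<in> N01 \<union> N1 \<Longrightarrow> i \<noteq> j \<Longrightarrow> aa i = ab i \<and> ra i = rb i"
    and i: "i \<in> N01 \<union> N1"
  shows "X i - Y i = (if i = j then ra j - rb j + beta * (\<Sum>m\<in>N01 \<union> N1. (p (aa j) j m - p (ab j) j m) * Y m) else 0)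
           + beta * (\<Sum>m\<in>N01 \<union> N1. p (aa i) i m * (X m - Y m))"
    "X i - Y i = (if i = j then ra j - rb j + beta * (\<Sum>m\<in>N01 \<union> N1. (p (aa j) j m - p (ab j) j m) * X m) else 0)
           + beta * (\<Sum>m\<in>N01 \<union> N1. p (ab i) i m * (X m - Y m))"
proof -
  have e: "X i - Y i = ra i - rb i + beta * ((\<Sum>m\<in>N01 \<union> N1. p (aa i) i m * X m) - (\<Sum>m\<in>N01 \<union> N1. p (ab i) i m * Y m))"
    using X Y i by (simp add: algebra_simps)
  show "X i - Y i = (if i = j then ra j - rb j + beta * (\<Sum>m\<in>N01 \<union> N1. (p (aa j) j m - p (ab j) j m) * Y m) else 0)
           + beta * (\<Sum>m\<in>N01 \<union> N1. p (aa i) i m * (X m - Y m))"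
  proof (cases "i = j")
    case True then show ?thesis using e
      by (simp add: left_diff_distrib right_diff_distrib sum_subtractf algebra_simps)
  next
    case False then show ?thesis using e same[OF i False]
      by (simp add: left_diff_distrib right_diff_distrib sum_subtractf algebra_simps)
  qed
  show "X i - Y i = (if i = j then ra j - rb j + beta * (\<Sum>m\<in>N01 \<union> N1. (p (aa j) j m - p (ab j) j m) * X m) else 0)
           + beta * (\<Sum>m\<in>N01 \<union> N1. p (ab i) i m * (X m - Y m))"
  proof (cases "i = j")
    case True then show ?thesis using e
      by (simp add: left_diff_distrib right_diff_distrib sum_subtractf algebra_simps)
  next
    case False then show ?thesis using e same[OF i False]
      by (simp add: left_diff_distrib right_diff_distrib sum_subtractf algebra_simps)
  qed
qed

lemma lin_comb:
  assumes RB: "restless_bandit N01 N1 p h th beta"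
    and d: "\<And>i. i \<in> N01 \<union> N1 \<Longrightarrow> d i = (if i = j then c else 0) + beta * (\<Sum>m\<in>N01 \<union> N1. p (act N1 U i) i m * d m)"
    and e: "\<And>i. i \<in> N01 \<union> N1 \<Longrightarrow> e i = (if i = j then w else 0) + beta * (\<Sum>m\<in>N01 \<union> N1. p (act N1 U i) i m * e m)"
    and w: "w \<noteq> 0" and i: "i \<in> N01 \<union> N1"
  shows "d i = c / w * e i"
proof -
  have "(\<lambda>k. d k - c / w * e k) i = 0"
  proof (rule contraction[OF RB _ i])
    fix k assume k: "k \<in> N01 \<union> N1"
    have "d k - c / w * e k = ((if k = j then c else 0) - c / w * (if k = j then w else 0))
        + beta * ((\<Sum>m\<in>N01 \<union> N1. p (act N1 U k) k m * d m) - c / w * (\<Sum>m\<in>N01 \<union> N1. p (act N1 U k) k m * e m))"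
      using d[OF k] e[OF k] by (simp add: algebra_simps)
    also have "(if k = j then c else 0) - c / w * (if k = j then w else 0) = 0" using w by simp
    also have "(\<Sum>m\<in>N01 \<union> N1. p (act N1 U k) k m * d m) - c / w * (\<Sum>m\<in>N01 \<union> N1. p (act N1 U k) k m * e m)
       = (\<Sum>m\<in>N01 \<union> N1. p (act N1 U k) k m * (d m - c / w * e m))"
      by (simp add: sum_distrib_left sum_subtractf right_diff_distrib mult_ac)
    finally show "d k - c / w * e k = beta * (\<Sum>m\<in>N01 \<union> N1. p (act N1 U k) k m * (d m - c / w * e m))" by simp
  qed
  then show ?thesis by simp
qed


theorem proposition7:
  fixes N01 N1 :: "'a set" and p :: "nat \<Rightarrow> 'a \<Rightarrow> 'a \<Rightarrow> real"
    and h :: "nat \<Rightarrow> 'a \<Rightarrow> real" and th :: "'a \<Rightarrow> real" and beta :: real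
    and F :: "'a set set" and S :: "'a set" and j :: 'a
  assumes RB: "restless_bandit N01 N1 p h th beta"
    and F: "F \<subseteq> Pow N01"
    and wpos: "\<forall>T\<in>F. \<forall>k\<in>N01. 0 < wS N01 N1 p th beta T k"
    and S: "S \<in> F" and j: "j \<in> S"
  shows "(\<forall>i\<in>N01 \<union> N1.
            vS N01 N1 p h beta (S - {j}) i - vS N01 N1 p h beta S i
              = cS N01 N1 p h beta S j / wS N01 N1 p th beta S j
                * (bS N01 N1 p th beta S i - bS N01 N1 p th beta (S - {j}) i)
          \<and> vS N01 N1 p h beta (S - {j}) i - vS N01 N1 p h beta S i
              = cS N01 N1 p h beta (S - {j}) j / wS N01 N1 p th beta (S - {j}) j
                * (bS N01 N1 p th beta S i - bS N01 N1 p th beta (S - {j}) i))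
       \<and> cS N01 N1 p h beta S j / wS N01 N1 p th beta S j
           = cS N01 N1 p h beta (S - {j}) j / wS N01 N1 p th beta (S - {j}) j
       \<and> (\<forall>i\<in>N01 \<union> N1.
            cS N01 N1 p h beta S i - cS N01 N1 p h beta (S - {j}) i
              = cS N01 N1 p h beta S j / wS N01 N1 p th beta S j
                * (wS N01 N1 p th beta S i - wS N01 N1 p th beta (S - {j}) i))"
proof -
  let ?N = "N01 \<union> N1"
  define T where "T = S - {j}"
  define V where "V U = vS N01 N1 p h beta U" for U
  define B where "B U = bS N01 N1 p th beta U" for U
  define C where "C U = cS N01 N1 p h beta U" for U
  define W where "W U = wS N01 N1 p th beta U" for U
  have jN01: "j \<in> N01" using F S j by auto
  have jN: "j \<in> ?N" using jN01 by simp
  have jN1: "j \<notin> N1" using jN01 RB_facts(2)[OF RB] by auto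
  have aSj: "act N1 S j = 1" using j by (simp add: act_def)
  have aTj: "act N1 T j = 0" using jN1 by (simp add: act_def T_def)
  have same: "act N1 T i = act N1 S i" if "i \<noteq> j" for i using that by (simp add: act_def T_def)
  have BV: "V U i = h (act N1 U i) i + beta * (\<Sum>m\<in>?N. p (act N1 U i) i m * V U m)" if "i \<in> ?N" for U i
  proof -
    have "V U = val N01 N1 p beta U (\<lambda>k. h (act N1 U k) k)" for U
      unfolding V_def by (simp add: vS_def val_def fun_eq_iff)
    then show ?thesis using val_bellman[OF RB that] by simp
  qed
  have BB: "B U i = th i * real (act N1 U i) + beta * (\<Sum>m\<in>?N. p (act N1 U i) i m * B U m)" if "i \<in> ?N" for U i
  proof -
    have "B U = val N01 N1 p beta U (\<lambda>k. th k * real (act N1 U k))" for U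
      unfolding B_def by (simp add: bS_def val_def fun_eq_iff)
    then show ?thesis using val_bellman[OF RB that] by simp
  qed
  have BVT: "\<forall>i\<in>?N. V T i = h (act N1 T i) i + beta * (\<Sum>m\<in>?N. p (act N1 T i) i m * V T m)" using BV by blast
  have BVS: "\<forall>i\<in>?N. V S i = h (act N1 S i) i + beta * (\<Sum>m\<in>?N. p (act N1 S i) i m * V S m)" using BV by blast
  have BBT: "\<forall>i\<in>?N. B T i = th i * real (act N1 T i) + beta * (\<Sum>m\<in>?N. p (act N1 T i) i m * B T m)" using BB by blast
  have BBS: "\<forall>i\<in>?N. B S i = th i * real (act N1 S i) + beta * (\<Sum>m\<in>?N. p (act N1 S i) i m * B S m)" using BB by blast
  define d where "d i = V T i - V S i" for i
  define e where "e i = B S i - B T i" for i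
  note DV = diff_eq[where X="V T" and Y="V S" and aa="\<lambda>i. act N1 T i" and ab="\<lambda>i. act N1 S i"
      and ra="\<lambda>k. h (act N1 T k) k" and rb="\<lambda>k. h (act N1 S k) k" and j=j, OF RB BVT BVS]
  note DB = diff_eq[where X="B S" and Y="B T" and aa="\<lambda>i. act N1 S i" and ab="\<lambda>i. act N1 T i"
      and ra="\<lambda>k. th k * real (act N1 S k)" and rb="\<lambda>k. th k * real (act N1 T k)" and j=j, OF RB BBS BBT]
  have cSj: "h (act N1 T j) j - h (act N1 S j) j + beta * (\<Sum>m\<in>?N. (p (act N1 T j) j m - p (act N1 S j) j m) * V S m) = C S j"
    unfolding C_def cS_def V_def using aSj aTj by simp
  have cTj: "h (act N1 T j) j - h (act N1 S j) j + beta * (\<Sum>m\<in>?N. (p (act N1 T j) j m - p (act N1 S j) j m) * V T m) = C T j"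
    unfolding C_def cS_def V_def using aSj aTj by simp
  have wTj: "th j * real (act N1 S j) - th j * real (act N1 T j) + beta * (\<Sum>m\<in>?N. (p (act N1 S j) j m - p (act N1 T j) j m) * B T m) = W T j"
    unfolding W_def wS_def B_def using aSj aTj jN01 by simp
  have wSj: "th j * real (act N1 S j) - th j * real (act N1 T j) + beta * (\<Sum>m\<in>?N. (p (act N1 S j) j m - p (act N1 T j) j m) * B S m) = W S j"
    unfolding W_def wS_def B_def using aSj aTj jN01 by simp
  have d1: "d i = (if i = j then C S j else 0) + beta * (\<Sum>m\<in>?N. p (act N1 T i) i m * d m)" if "i \<in> ?N" for i
    using DV(1)[OF _ that] same cSj unfolding d_def by (auto simp: same)
  have d2: "d i = (if i = j then C T j else 0) + beta * (\<Sum>m\<in>?N. p (act N1 S i) i m * d m)" if "i \<in> ?N" for i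
    using DV(2)[OF _ that] same cTj unfolding d_def by (auto simp: same)
  have e1: "e i = (if i = j then W T j else 0) + beta * (\<Sum>m\<in>?N. p (act N1 S i) i m * e m)" if "i \<in> ?N" for i
    using DB(1)[OF _ that] same wTj unfolding e_def by (auto simp: same)
  have e2: "e i = (if i = j then W S j else 0) + beta * (\<Sum>m\<in>?N. p (act N1 T i) i m * e m)" if "i \<in> ?N" for i
    using DB(2)[OF _ that] same wSj unfolding e_def by (auto simp: same)
  have WSpos: "0 < W S j" using wpos S jN01 unfolding W_def by auto
  have enz: False if "\<forall>i\<in>?N. e i = 0"
  proof -
    have "e j = W S j" using e2[OF jN] that by simp
    then show False using that jN WSpos by simp
  qed
  have WT0: "W T j \<noteq> 0"
  proof
    assume "W T j = 0"
    then have e1': "e i = beta * (\<Sum>m\<in>?N. p (act N1 S i) i m * e m)" if "i \<in> ?N" for i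
      using e1[OF that] by simp
    have "\<forall>i\<in>?N. e i = 0"
      using contraction[OF RB e1'] by blast
    then show False by (rule enz)
  qed
  have A1: "d i = C S j / W S j * e i" if "i \<in> ?N" for i
    by (rule lin_comb[OF RB d1 e2 _ that]) (use WSpos in auto)
  have A2: "d i = C T j / W T j * e i" if "i \<in> ?N" for i
    by (rule lin_comb[OF RB d2 e1 WT0 that])
  have Bq: "C S j / W S j = C T j / W T j"
  proof (rule ccontr)
    assume ne: "C S j / W S j \<noteq> C T j / W T j"
    have "\<forall>i\<in>?N. e i = 0"
    proof
      fix i assume i: "i \<in> ?N"
      have "(C S j / W S j - C T j / W T j) * e i = 0" using A1[OF i] A2[OF i] by (simp add: algebra_simps)
      then show "e i = 0" using ne by simp
    qed
    then show False by (rule enz)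
  qed
  have Cc: "C S i - C T i = C S j / W S j * (W S i - W T i)" if i: "i \<in> ?N" for i
  proof -
    have "C S i - C T i = beta * (\<Sum>m\<in>?N. (p 0 i m - p 1 i m) * (- d m))"
    proof -
      have "(\<Sum>m\<in>?N. (p 0 i m - p 1 i m) * (- d m)) = (\<Sum>m\<in>?N. (p 0 i m - p 1 i m) * V S m - (p 0 i m - p 1 i m) * V T m)"
        by (rule sum.cong) (auto simp: d_def algebra_simps)
      then show ?thesis unfolding C_def cS_def V_def by (simp add: sum_subtractf right_diff_distrib)
    qed
    also have "\<dots> = beta * (\<Sum>m\<in>?N. (p 0 i m - p 1 i m) * (- (C S j / W S j * e m)))"
      using A1 by simp
    also have "\<dots> = C S j / W S j * (beta * (\<Sum>m\<in>?N. (p 1 i m - p 0 i m) * e m))"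
      by (simp add: sum_distrib_left, rule sum.cong) (auto simp: algebra_simps diff_divide_distrib)
    also have "beta * (\<Sum>m\<in>?N. (p 1 i m - p 0 i m) * e m) = W S i - W T i"
    proof -
      have "(\<Sum>m\<in>?N. (p 1 i m - p 0 i m) * e m) = (\<Sum>m\<in>?N. (p 1 i m - p 0 i m) * B S m - (p 1 i m - p 0 i m) * B T m)"
        by (rule sum.cong) (auto simp: e_def algebra_simps)
      then show ?thesis unfolding W_def wS_def B_def by (simp add: sum_subtractf right_diff_distrib)
    qed
    finally show ?thesis .
  qed
  show ?thesis
    using A1 A2 Bq Cc unfolding d_def e_def V_def B_def C_def W_def T_def by auto
qed

end
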